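(* The unary implicit signature $\kappa$ is pure: for every positive integer $d$ and every $\alpha\in\widehat{\mathbb N}$, if $d\alpha$ is a $\bar\kappa$-exponent, then $\alpha$ is a $\bar\kappa$-exponent.
   Context: $\widehat{\mathbb N}$ is the profinite completion of $(\mathbb N,+)$. $\kappa$ is the implicit signature consisting of multiplication and the unary $(\omega-1)$-power. For a unary implicit signature (multiplication plus some $\alpha$-power operations with $\alpha\in\widehat{\mathbb N}\setminus\mathbb N$), its exponents are the $\alpha$ whose $\alpha$-power belongs to it; it is complete if its exponent set is stable under $\alpha\mapsto\alpha\pm1$, and $\bar\kappa$ is the smallest complete unary signature containing $\kappa$ (its exponents are $\omega+n$, $n\in\mathbb Z$). *)

theory Defs
  imports Main
begin

text \<open>The profinite completion of the additive monoid of natural numbers, realised as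
  the inverse limit of its finite quotients.  Every finite quotient of (nat,+) is a
  cyclic monoid C(i,p) = nat / (i = i+p) (index i, period p > 0), represented by
  {0..<i+p}; the canonical map nat -> C(i,p) is red i p.  For i <= i' and p dvd p'
  the quotient map C(i',p') -> C(i,p) is again red i p.  An element is a compatible
  family (x i p) for p > 0 (components with p = 0 are normalised to 0).\<close>

definition red :: "nat \<Rightarrow> nat \<Rightarrow> nat \<Rightarrow> nat" where
  "red i p m = (if m < i then m else i + (m - i) mod p)"

typedef pnat = "{x :: nat \<Rightarrow> nat \<Rightarrow> nat.
    (\<forall>i. x i 0 = 0) \<and>
    (\<forall>i p. 0 < p \<longrightarrow> x i p < i + p) \<and>
    (\<forall>i p i' p'. 0 < p \<and> 0 < p' \<and> i \<le> i' \<and> p dvd p' \<longrightarrow> x i p = red i p (x i' p'))}"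
  by (rule exI[of _ "\<lambda>_ _. 0"]) (auto simp: red_def)

definition padd :: "pnat \<Rightarrow> pnat \<Rightarrow> pnat" where
  "padd x y = Abs_pnat (\<lambda>i p. if p = 0 then 0 else red i p (Rep_pnat x i p + Rep_pnat y i p))"

definition pnat_of_nat :: "nat \<Rightarrow> pnat" where
  "pnat_of_nat n = Abs_pnat (\<lambda>i p. if p = 0 then 0 else red i p n)"

primrec pmult :: "nat \<Rightarrow> pnat \<Rightarrow> pnat" where
  "pmult 0 a = pnat_of_nat 0"
| "pmult (Suc n) a = padd a (pmult n a)"

text \<open>omega = lim n!, computed componentwise (n! is eventually constant in each C(i,p)).\<close>
definition pomega :: pnat where
  "pomega = Abs_pnat (\<lambda>i p. if p = 0 then 0 else red i p (fact (i + p)))"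

text \<open>Exponents of the completion of kappa: omega + n, n an integer.  For n >= 0 this is
  omega + n; for n = -m < 0 it is the element beta with beta + m = omega.\<close>
definition kbar_exponent :: "pnat \<Rightarrow> bool" where
  "kbar_exponent \<alpha> \<longleftrightarrow>
     (\<exists>n::nat. \<alpha> = padd pomega (pnat_of_nat n) \<or> padd \<alpha> (pnat_of_nat n) = pomega)"

end

theory Submission
  imports Defs
begin

lemma nmod_iff: "((a::nat) mod p = b mod p) = (int p dvd int a - int b)"
  by (metis mod_eq_dvd_iff of_nat_eq_iff of_nat_mod)

lemma red_ge_iff: "0 < p \<Longrightarrow> (i \<le> red i p m) = (i \<le> m)"
  by (auto simp: red_def)

lemma red_small: "m < i \<Longrightarrow> red i p m = m"
  by (simp add: red_def)

lemma red_lt: "0 < p \<Longrightarrow> red i p m < i + p"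
  by (auto simp: red_def)

lemma red_mod: "i \<le> m \<Longrightarrow> red i p m mod p = m mod p"
proof -
  assume "i \<le> m"
  then have "red i p m = i + (m - i) mod p" by (simp add: red_def)
  then have "red i p m mod p = (i + (m - i)) mod p" by (simp add: mod_add_right_eq)
  then show ?thesis using \<open>i \<le> m\<close> by simp
qed

lemma red_eq: "0 < p \<Longrightarrow> i \<le> a \<Longrightarrow> i \<le> b \<Longrightarrow> a mod p = b mod p \<Longrightarrow> red i p a = red i p b"
proof -
  assume *: "0 < p" "i \<le> a" "i \<le> b" "a mod p = b mod p"
  have "(i + (a - i)) mod p = (i + (b - i)) mod p" using * by simp
  then have "(a - i) mod p = (b - i) mod p"
    by (simp add: nmod_iff)
  then show ?thesis using * by (simp add: red_def)
qed

lemma red_red: "0 < p \<Longrightarrow> 0 < p' \<Longrightarrow> i \<le> i' \<Longrightarrow> p dvd p' \<Longrightarrow> red i p (red i' p' m) = red i p m"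
proof (cases "m < i'")
  case True then show ?thesis by (simp add: red_small)
next
  case False
  assume *: "0 < p" "0 < p'" "i \<le> i'" "p dvd p'"
  have g: "i' \<le> red i' p' m" using * False red_ge_iff by auto
  have "red i' p' m mod p' = m mod p'" using False red_mod by simp
  then have "red i' p' m mod p = m mod p" using *(4) by (metis mod_mod_cancel)
  then show ?thesis using * g False by (intro red_eq) auto
qed

lemma red_add_right: "0 < p \<Longrightarrow> red i p (a + red i p b) = red i p (a + b)"
proof (cases "b < i")
  case True then show ?thesis by (simp add: red_small)
next
  case False
  assume p: "0 < p"
  have g: "i \<le> red i p b" using p False red_ge_iff by auto
  have "(a + red i p b) mod p = (a + b) mod p"
    using red_mod[of i b p] False by (metis mod_add_right_eq not_less)
  then show ?thesis using p g False by (intro red_eq) auto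
qed

lemma red_add_left: "0 < p \<Longrightarrow> red i p (red i p a + b) = red i p (a + b)"
  using red_add_right[of p i b a] by (simp add: add.commute)

lemma Rep_compat: "0 < p \<Longrightarrow> 0 < p' \<Longrightarrow> i \<le> i' \<Longrightarrow> p dvd p' \<Longrightarrow> Rep_pnat x i p = red i p (Rep_pnat x i' p')"
  using Rep_pnat[of x] by auto

lemma Rep_lt: "0 < p \<Longrightarrow> Rep_pnat x i p < i + p"
  using Rep_pnat[of x] by auto

lemma Rep_0: "Rep_pnat x i 0 = 0"
  using Rep_pnat[of x] by auto

lemma Rep_padd: "0 < p \<Longrightarrow> Rep_pnat (padd x y) i p = red i p (Rep_pnat x i p + Rep_pnat y i p)"
proof -
  assume p: "0 < p"
  let ?f = "\<lambda>i p. if p = 0 then 0 else red i p (Rep_pnat x i p + Rep_pnat y i p)"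
  have "?f \<in> {x :: nat \<Rightarrow> nat \<Rightarrow> nat.
    (\<forall>i. x i 0 = 0) \<and>
    (\<forall>i p. 0 < p \<longrightarrow> x i p < i + p) \<and>
    (\<forall>i p i' p'. 0 < p \<and> 0 < p' \<and> i \<le> i' \<and> p dvd p' \<longrightarrow> x i p = red i p (x i' p'))}"
  unfolding mem_Collect_eq
  proof (intro conjI allI impI; (elim conjE)?)
    show "\<And>i. ?f i 0 = 0" by simp
    show "\<And>i p. 0 < p \<Longrightarrow> ?f i p < i + p" by (simp add: red_lt)
  next
    fix i p i' p' :: nat
    assume *: "0 < p" "0 < p'" "i \<le> i'" "p dvd p'"
    have "red i p (Rep_pnat x i p + Rep_pnat y i p)
        = red i p (red i p (Rep_pnat x i' p') + red i p (Rep_pnat y i' p'))"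
      using Rep_compat[OF *, of x] Rep_compat[OF *, of y] by simp
    also have "\<dots> = red i p (Rep_pnat x i' p' + Rep_pnat y i' p')"
      using *(1) by (simp add: red_add_left red_add_right)
    also have "\<dots> = red i p (red i' p' (Rep_pnat x i' p' + Rep_pnat y i' p'))"
      using red_red[OF *] by simp
    finally show "?f i p = red i p (?f i' p')"
      using *(1,2) by simp
  qed
  then show ?thesis using p by (simp add: padd_def Abs_pnat_inverse)
qed

lemma Rep_nat: "0 < p \<Longrightarrow> Rep_pnat (pnat_of_nat n) i p = red i p n"
proof -
  assume p: "0 < p"
  let ?f = "\<lambda>i p. if p = 0 then 0 else red i p n"
  have "?f \<in> {x :: nat \<Rightarrow> nat \<Rightarrow> nat.
    (\<forall>i. x i 0 = 0) \<and>
    (\<forall>i p. 0 < p \<longrightarrow> x i p < i + p) \<and>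
    (\<forall>i p i' p'. 0 < p \<and> 0 < p' \<and> i \<le> i' \<and> p dvd p' \<longrightarrow> x i p = red i p (x i' p'))}"
    by (auto simp: red_lt red_red)
  then show ?thesis using p by (simp add: pnat_of_nat_def Abs_pnat_inverse)
qed

lemma fact_ge: "k \<le> fact k" for k :: nat
  by (metis fact_ge_self)

lemma fact_dvd: "0 < p \<Longrightarrow> p dvd (fact (i + p) :: nat)"
  by (simp add: dvd_fact)

lemma Rep_omega: "0 < p \<Longrightarrow> Rep_pnat pomega i p = red i p (fact (i + p))"
proof -
  assume p: "0 < p"
  let ?f = "\<lambda>i p. if p = 0 then 0 else red i p (fact (i + p))"
  have "?f \<in> {x :: nat \<Rightarrow> nat \<Rightarrow> nat.
    (\<forall>i. x i 0 = 0) \<and>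
    (\<forall>i p. 0 < p \<longrightarrow> x i p < i + p) \<and>
    (\<forall>i p i' p'. 0 < p \<and> 0 < p' \<and> i \<le> i' \<and> p dvd p' \<longrightarrow> x i p = red i p (x i' p'))}"
  unfolding mem_Collect_eq
  proof (intro conjI allI impI; (elim conjE)?)
    show "\<And>i. ?f i 0 = 0" by simp
    show "\<And>i p. 0 < p \<Longrightarrow> ?f i p < i + p" by (simp add: red_lt)
  next
    fix i p i' p' :: nat
    assume *: "0 < p" "0 < p'" "i \<le> i'" "p dvd p'"
    have a: "i \<le> fact (i + p)" using fact_ge[of "i+p"] by linarith
    have b: "i \<le> fact (i' + p')" using fact_ge[of "i'+p'"] *(3) by linarith
    have "p dvd fact (i' + p')" using fact_dvd[OF *(2), of i'] *(4) dvd_trans by blast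
    then have "fact (i + p) mod p = (fact (i' + p') :: nat) mod p"
      using fact_dvd[OF *(1), of i] by simp
    then have "red i p (fact (i + p)) = red i p (fact (i' + p'))"
      using * a b by (intro red_eq) auto
    then show "?f i p = red i p (?f i' p')"
      using red_red[OF *] *(1,2) by simp
  qed
  then show ?thesis using p by (simp add: pomega_def Abs_pnat_inverse)
qed

lemma Rep_pmult: "0 < p \<Longrightarrow> Rep_pnat (pmult d a) i p = red i p (d * Rep_pnat a i p)"
proof (induction d)
  case 0 then show ?case by (simp add: Rep_nat)
next
  case (Suc d) then show ?case by (simp add: Rep_padd red_add_right)
qed

definition P :: "pnat \<Rightarrow> int \<Rightarrow> bool" where
  "P x k \<longleftrightarrow> (\<forall>i p. 0 < p \<longrightarrow> i \<le> Rep_pnat x i p \<and> int p dvd int (Rep_pnat x i p) - k)"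

lemma red_int_dvd: "i \<le> m \<Longrightarrow> int p dvd int (red i p m) - int m"
  using red_mod[of i m p] by (simp add: nmod_iff)

lemma stuck: "0 < p \<Longrightarrow> Rep_pnat x i p < i \<Longrightarrow> i \<le> i' \<Longrightarrow> Rep_pnat x i' p = Rep_pnat x i p"
proof -
  assume *: "0 < p" "Rep_pnat x i p < i" "i \<le> i'"
  have e: "Rep_pnat x i p = red i p (Rep_pnat x i' p)" using Rep_compat[of p p i i' x] * by simp
  show ?thesis
  proof (cases "Rep_pnat x i' p < i")
    case True then show ?thesis using e by (simp add: red_small)
  next
    case False then have "i \<le> red i p (Rep_pnat x i' p)" using red_ge_iff *(1) by auto
    then show ?thesis using e *(2) by simp
  qed
qed

lemma to_P: "kbar_exponent x \<Longrightarrow> \<exists>k. P x k"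
proof -
  assume "kbar_exponent x"
  then obtain n where n: "x = padd pomega (pnat_of_nat n) \<or> padd x (pnat_of_nat n) = pomega"
    unfolding kbar_exponent_def by blast
  show ?thesis
  proof (cases "x = padd pomega (pnat_of_nat n)")
    case True
    have "P x (int n)" unfolding P_def
    proof (intro allI impI)
      fix i p :: nat assume p: "0 < p"
      have ge: "i \<le> fact (i + p) + red i p n" using fact_ge[of "i+p"] by linarith
      have r: "Rep_pnat x i p = red i p (fact (i + p) + red i p n)"
        using True p by (simp add: Rep_padd Rep_omega Rep_nat red_add_left)
      have "int p dvd int (Rep_pnat x i p) - int (fact (i + p) + red i p n)"
        using r red_int_dvd[OF ge] by simp
      moreover have "int p dvd int (fact (i+p))" using fact_dvd[OF p, of i] by (metis int_dvd_int_iff)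
      moreover have "int p dvd int (red i p n) - int n"
        by (cases "n < i") (auto simp: red_small red_int_dvd)
      ultimately have "int p dvd (int (Rep_pnat x i p) - int (fact (i + p) + red i p n))
          + int (fact (i+p)) + (int (red i p n) - int n)"
        by (rule dvd_add[OF dvd_add])
      then have "int p dvd int (Rep_pnat x i p) - int n" by simp
      moreover have "i \<le> Rep_pnat x i p" using r ge red_ge_iff p by auto
      ultimately show "i \<le> Rep_pnat x i p \<and> int p dvd int (Rep_pnat x i p) - int n" by simp
    qed
    then show ?thesis by blast
  next
    case False
    then have e: "padd x (pnat_of_nat n) = pomega" using n by blast
    have key: "red i p (Rep_pnat x i p + n) = red i p (fact (i + p))" if p: "0 < p" for i p
    proof -
      have "Rep_pnat (padd x (pnat_of_nat n)) i p = Rep_pnat pomega i p" using e by simp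
      then show ?thesis using p by (simp add: Rep_padd Rep_omega Rep_nat red_add_right)
    qed
    have "P x (- int n)" unfolding P_def
    proof (intro allI impI)
      fix i p :: nat assume p: "0 < p"
      have ge: "i \<le> Rep_pnat x i p"
      proof (rule ccontr)
        assume "\<not> i \<le> Rep_pnat x i p"
        then have lt: "Rep_pnat x i p < i" by simp
        define i' where "i' = max i (Rep_pnat x i p + n + 1)"
        have s: "Rep_pnat x i' p = Rep_pnat x i p" by (rule stuck[OF p lt]) (simp add: i'_def)
        have "red i' p (Rep_pnat x i' p + n) = Rep_pnat x i p + n"
          using s i'_def by (simp add: red_small)
        moreover have "i' \<le> red i' p (fact (i' + p))"
          using red_ge_iff[OF p] fact_ge[of "i'+p"] by auto
        ultimately show False using key[OF p, of i'] i'_def by simp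
      qed
      have g2: "i \<le> Rep_pnat x i p + n" using ge by simp
      have g3: "i \<le> fact (i + p)" using fact_ge[of "i+p"] by linarith
      have "int p dvd int (red i p (Rep_pnat x i p + n)) - int (Rep_pnat x i p + n)"
        using red_int_dvd[OF g2] .
      moreover have "int p dvd int (red i p (fact (i+p))) - int (fact (i+p))"
        using red_int_dvd[OF g3] .
      moreover have "int p dvd int (fact (i+p))" using fact_dvd[OF p, of i] by (metis int_dvd_int_iff)
      ultimately have "int p dvd int (fact (i+p)) + (int (red i p (fact (i+p))) - int (fact (i+p)))
          - (int (red i p (Rep_pnat x i p + n)) - int (Rep_pnat x i p + n))"
        by (blast intro: dvd_add dvd_diff)
      then have "int p dvd int (Rep_pnat x i p + n)"
        using key[OF p, of i] by simp
      then show "i \<le> Rep_pnat x i p \<and> int p dvd int (Rep_pnat x i p) - - int n"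
        using ge by simp
    qed
    then show ?thesis by blast
  qed
qed

lemma red_char: "0 < p \<Longrightarrow> i \<le> v \<Longrightarrow> v < i + p \<Longrightarrow> i \<le> m \<Longrightarrow> int p dvd int v - int m \<Longrightarrow> v = red i p m"
proof -
  assume *: "0 < p" "i \<le> v" "v < i + p" "i \<le> m" "int p dvd int v - int m"
  have "v mod p = m mod p" using *(5) by (simp add: nmod_iff)
  then have "red i p v = red i p m" using * by (intro red_eq) auto
  moreover have "red i p v = v" using * by (simp add: red_def le_mod_geq)
  ultimately show ?thesis by simp
qed

lemma from_P: "P x k \<Longrightarrow> kbar_exponent x"
proof -
  assume Px: "P x k"
  show ?thesis
  proof (cases "0 \<le> k")
    case True
    define n where "n = nat k"
    have "Rep_pnat x = Rep_pnat (padd pomega (pnat_of_nat n))"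
    proof (intro ext)
      fix i p show "Rep_pnat x i p = Rep_pnat (padd pomega (pnat_of_nat n)) i p"
      proof (cases "p = 0")
        case True then show ?thesis by (simp add: Rep_0)
      next
        case False then have p: "0 < p" by simp
        have r: "Rep_pnat (padd pomega (pnat_of_nat n)) i p = red i p (fact (i + p) + n)"
          using p by (simp add: Rep_padd Rep_omega Rep_nat red_add_left red_add_right)
        have g: "i \<le> fact (i + p) + n" using fact_ge[of "i+p"] by linarith
        have d1: "int p dvd int (Rep_pnat x i p) - k" using Px p unfolding P_def by blast
        have d2: "int p dvd int (fact (i+p))" using fact_dvd[OF p, of i] by (metis int_dvd_int_iff)
        have "int p dvd int (Rep_pnat x i p) - int (fact (i + p) + n)"
        proof -
          have "int p dvd (int (Rep_pnat x i p) - k) - int (fact (i+p))"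
            using d1 d2 by (rule dvd_diff)
          moreover have "k = int n" using True n_def by simp
          ultimately show ?thesis by (simp add: algebra_simps)
        qed
        moreover have ge: "i \<le> Rep_pnat x i p" using Px p unfolding P_def by blast
        ultimately show ?thesis using r red_char[OF p ge Rep_lt[OF p] g] by simp
      qed
    qed
    then have "x = padd pomega (pnat_of_nat n)" by (simp add: Rep_pnat_inject)
    then show ?thesis unfolding kbar_exponent_def by blast
  next
    case False
    define n where "n = nat (- k)"
    have "Rep_pnat (padd x (pnat_of_nat n)) = Rep_pnat pomega"
    proof (intro ext)
      fix i p show "Rep_pnat (padd x (pnat_of_nat n)) i p = Rep_pnat pomega i p"
      proof (cases "p = 0")
        case True then show ?thesis by (simp add: Rep_0)
      next
        case False' : False then have p: "0 < p" by simp
        have r: "Rep_pnat (padd x (pnat_of_nat n)) i p = red i p (Rep_pnat x i p + n)"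
          using p by (simp add: Rep_padd Rep_nat red_add_right)
        have ge: "i \<le> Rep_pnat x i p" using Px p unfolding P_def by blast
        have g: "i \<le> fact (i + p)" using fact_ge[of "i+p"] by linarith
        have d1: "int p dvd int (Rep_pnat x i p) - k" using Px p unfolding P_def by blast
        have d2: "int p dvd int (fact (i+p))" using fact_dvd[OF p, of i] by (metis int_dvd_int_iff)
        have kn: "k = - int n" using False n_def by simp
        have "int p dvd int (Rep_pnat x i p + n) - int (fact (i + p))"
        proof -
          have "int p dvd (int (Rep_pnat x i p) - k) - int (fact (i+p))"
            using d1 d2 by (rule dvd_diff)
          then show ?thesis using kn by (simp add: algebra_simps)
        qed
        then have "(Rep_pnat x i p + n) mod p = fact (i + p) mod p"
          by (simp add: nmod_iff)
        then have "red i p (Rep_pnat x i p + n) = red i p (fact (i+p))"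
          using p ge g by (intro red_eq) auto
        then show ?thesis using r p by (simp add: Rep_omega)
      qed
    qed
    then have "padd x (pnat_of_nat n) = pomega" by (simp add: Rep_pnat_inject)
    then show ?thesis unfolding kbar_exponent_def by blast
  qed
qed

theorem lemma3p2:
  fixes d :: nat and \<alpha> :: pnat
  assumes "0 < d"
    and "kbar_exponent (pmult d \<alpha>)"
  shows "kbar_exponent \<alpha>"
proof -
  obtain k where Pk: "P (pmult d \<alpha>) k" using to_P assms(2) by blast
  let ?a = "Rep_pnat \<alpha>"
  have ge: "i \<le> ?a i p" if p: "0 < p" for i p
  proof (rule ccontr)
    assume "\<not> i \<le> ?a i p"
    then have lt: "?a i p < i" by simp
    define i' where "i' = max i (d * ?a i p + 1)"
    have s: "?a i' p = ?a i p" by (rule stuck[OF p lt]) (simp add: i'_def)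
    have "Rep_pnat (pmult d \<alpha>) i' p = d * ?a i p"
      using s p i'_def by (simp add: Rep_pmult red_small)
    moreover have "i' \<le> Rep_pnat (pmult d \<alpha>) i' p" using Pk p unfolding P_def by blast
    ultimately show False using i'_def by simp
  qed
  have dv: "int p dvd int (d * ?a i p) - k" if p: "0 < p" for i p
  proof -
    have "?a i p \<le> d * ?a i p" using assms(1) by simp
    then have g: "i \<le> d * ?a i p" using ge[OF p, of i] by (rule order_trans[rotated])
    have "int p dvd int (red i p (d * ?a i p)) - int (d * ?a i p)" using red_int_dvd[OF g] .
    moreover have "int p dvd int (red i p (d * ?a i p)) - k"
      using Pk p unfolding P_def by (simp add: Rep_pmult)
    ultimately have "int p dvd (int (red i p (d * ?a i p)) - k) - (int (red i p (d * ?a i p)) - int (d * ?a i p))"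
      by (blast intro: dvd_diff)
    then show ?thesis by simp
  qed
  have "int d dvd int (d * ?a 0 d) - k" using dv assms(1) by blast
  moreover have "int d dvd int (d * ?a 0 d)" by simp
  ultimately have "int d dvd int (d * ?a 0 d) - (int (d * ?a 0 d) - k)"
    by (blast intro: dvd_diff)
  then have "int d dvd k" by simp
  then obtain q where q: "k = int d * q" by blast
  have "P \<alpha> q" unfolding P_def
  proof (intro allI impI conjI)
    fix i p :: nat assume p: "0 < p"
    show "i \<le> ?a i p" using ge[OF p] .
    have dp: "0 < d * p" using p assms(1) by simp
    have "int (d * p) dvd int (d * ?a i (d * p)) - k" using dv[OF dp] .
    moreover have "int (d * ?a i (d * p)) - k = int d * (int (?a i (d * p)) - q)"
      using q by (simp add: right_diff_distrib)
    ultimately have "int d * int p dvd int d * (int (?a i (d * p)) - q)"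
      by simp
    then have h1: "int p dvd int (?a i (d * p)) - q" using assms(1) by simp
    have e: "?a i p = red i p (?a i (d * p))" using Rep_compat[OF p dp, of i i \<alpha>] by simp
    have h2: "int p dvd int (?a i p) - int (?a i (d * p))"
      using e red_int_dvd[OF ge[OF dp, of i]] by simp
    have "int p dvd (int (?a i p) - int (?a i (d * p))) + (int (?a i (d * p)) - q)"
      using h2 h1 by (rule dvd_add)
    then show "int p dvd int (?a i p) - q" by simp
  qed
  then show ?thesis by (rule from_P)
qed

end
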